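(* $e(\lambda)\to 0$ from below as $\lambda\to\infty$, i.e. $e(\lambda)\to 0^-$.
   Context: Standing setup. Let $\gamma>0$; let $a_1,\dots,a_p>0$ with weights $\omega_i>0$, $\sum_i\omega_i=1$, and $b_1,\dots,b_n>0$ with weights $\pi_j>0$, $\sum_j\pi_j=1$. Let $\mu$ be the limiting spectral distribution of $\mathbf{N}\mathbf{N}^T$ where $\mathbf{N}=\mathbf{A}^{1/2}\mathbf{G}\mathbf{B}^{1/2}$ is $k\times l$, $\mathbf{G}$ has iid mean-zero entries of variance $1/l$, $k/l\to\gamma$, and the spectral distributions of $\mathbf{A},\mathbf{B}$ converge to $\nu=\sum_i\omega_i\delta_{a_i}$ and $\underline{\nu}=\sum_j\pi_j\delta_{b_j}$. $\mu$ is a compactly supported probability measure on $[0,\infty)$; $\lambda^*>0$ is the right endpoint of its support, and $s(\lambda)=\int\frac{d\mu(t)}{t-\lambda}$ for $\lambda>\lambda^*$. Define $G(e)=\sum_{j=1}^n\frac{b_j\pi_j}{1+\gamma b_j e}$. It is known (master equations) that there is a continuous (indeed smooth) real function $e(\lambda)$ on $(\lambda^*,\infty)$, never equal to a pole $-1/(\gamma b_j)$ of $G$ and with $a_iG(e(\lambda))\ne\lambda$, satisfying $s(\lambda)=\sum_{i=1}^p\frac{\omega_i}{a_iG(e(\lambda))-\lambda}$ and $e(\lambda)=\sum_{i=1}^p\frac{a_i\omega_i}{a_iG(e(\lambda))-\lambda}$. *)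

theory Defs
  imports "HOL-Probability.Probability"
begin

definition msupport :: "real measure \<Rightarrow> real set" where
  "msupport M = {x. \<forall>r>0. measure M (ball x r) > 0}"

definition right_endpoint :: "real measure \<Rightarrow> real" where
  "right_endpoint M = Sup (msupport M)"

definition stieltjes :: "real measure \<Rightarrow> real \<Rightarrow> real" where
  "stieltjes M lam = (\<integral>t. 1 / (t - lam) \<partial>M)"

definition Gfun :: "real \<Rightarrow> nat \<Rightarrow> (nat \<Rightarrow> real) \<Rightarrow> (nat \<Rightarrow> real) \<Rightarrow> real \<Rightarrow> real" where
  "Gfun \<gamma> n b \<pi> x = (\<Sum>j<n. b j * \<pi> j / (1 + \<gamma> * b j * x))"

end

theory Submission imports Defs begin

lemma support_AE:
  assumes fm: "finite_measure M" and borel: "sets M = sets borel"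
  shows "AE t in M. t \<in> msupport M"
proof -
  define B where "B = (\<lambda>(q::rat,k::nat). ball (real_of_rat q) (1/Suc k))"
  define I where "I = {qk. B qk \<in> null_sets M}"
  have cI: "countable I" by (rule countable_subset[of _ UNIV]) auto
  have N: "\<Union>(B ` I) \<in> null_sets M"
    by (rule null_sets_UN'[OF cI]) (auto simp: I_def)
  show ?thesis
  proof (rule AE_I'[OF N], safe)
    fix x assume xs: "x \<in> space M" and xn: "x \<notin> msupport M"
    then obtain r where r: "r > 0" "measure M (ball x r) \<le> 0"
      unfolding msupport_def by (auto simp: not_less)
    have bs: "\<And>y s. ball y s \<in> sets M" using borel by simp
    have "measure M (ball x r) = 0" using r(2) measure_nonneg[of M "ball x r"] by linarith
    hence "emeasure M (ball x r) = 0" using finite_measure.emeasure_eq_measure[OF fm] by simp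
    hence nb: "ball x r \<in> null_sets M" using bs by (auto intro: null_setsI)
    obtain k where k: "inverse (real (Suc k)) < r/2" using reals_Archimedean[of "r/2"] r by auto
    have kpos: "1 / real (Suc k) > 0" by simp
    obtain q where q: "q \<in> \<rat>" "x - 1/Suc k < q" "q < x"
      using Rats_dense_in_real[of "x - 1/Suc k" x] kpos by auto
    obtain q' where q': "q = real_of_rat q'" using q(1) Rats_cases by blast
    have xin: "x \<in> B (q', k)" using q q' by (auto simp: B_def dist_real_def)
    have "B (q', k) \<subseteq> ball x r"
    proof
      fix y assume "y \<in> B (q', k)"
      hence "\<bar>q - y\<bar> < 1/Suc k" using q' by (simp add: B_def dist_real_def)
      moreover have "\<bar>x - q\<bar> < 1/Suc k" using q by simp
      moreover have "1/real (Suc k) < r/2" using k by (simp add: inverse_eq_divide)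
      ultimately show "y \<in> ball x r" by (simp add: dist_real_def)
    qed
    hence "B (q',k) \<in> null_sets M" using nb bs by (auto simp: B_def intro: null_sets_subset)
    hence "(q',k) \<in> I" by (simp add: I_def)
    thus "x \<in> \<Union>(B ` I)" using xin by blast
  qed
qed

theorem corollary3p3:
  fixes \<gamma> :: real and p n :: nat and a \<omega> b \<pi> :: "nat \<Rightarrow> real"
    and M :: "real measure" and e :: "real \<Rightarrow> real"
  assumes gamma_pos: "\<gamma> > 0"
    and a_pos: "\<forall>i<p. a i > 0" and omega_pos: "\<forall>i<p. \<omega> i > 0"
    and omega_sum: "(\<Sum>i<p. \<omega> i) = 1"
    and b_pos: "\<forall>j<n. b j > 0" and pi_pos: "\<forall>j<n. \<pi> j > 0"
    and pi_sum: "(\<Sum>j<n. \<pi> j) = 1"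
    and prob: "prob_space M" and borel: "sets M = sets borel"
    and supp_compact: "compact (msupport M)"
    and supp_nonneg: "msupport M \<subseteq> {0..}"
    and endpoint_pos: "right_endpoint M > 0"
    and e_cont: "continuous_on {right_endpoint M<..} e"
    and no_pole: "\<forall>lam > right_endpoint M. \<forall>j<n. e lam \<noteq> - 1 / (\<gamma> * b j)"
    and nondeg: "\<forall>lam > right_endpoint M. \<forall>i<p. a i * Gfun \<gamma> n b \<pi> (e lam) \<noteq> lam"
    and s_eq: "\<forall>lam > right_endpoint M.
       stieltjes M lam = (\<Sum>i<p. \<omega> i / (a i * Gfun \<gamma> n b \<pi> (e lam) - lam))"
    and e_eq: "\<forall>lam > right_endpoint M.
       e lam = (\<Sum>i<p. a i * \<omega> i / (a i * Gfun \<gamma> n b \<pi> (e lam) - lam))"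
  shows "filterlim e (at_left 0) at_top"
proof -
  define R where "R = right_endpoint M"
  define g where "g = (\<lambda>lam. Gfun \<gamma> n b \<pi> (e lam))"
  define s where "s = stieltjes M"
  define A where "A = (\<Sum>i<p. a i)"
  define S where "S = (\<Sum>i<p. a i * \<omega> i)"
  define Bc where "Bc = (\<Sum>j<n. b j * \<pi> j)"
  have pne: "p > 0" using omega_sum by (cases p) auto
  have ai_le: "\<And>i. i < p \<Longrightarrow> a i \<le> A"
    unfolding A_def using a_pos
    by (intro member_le_sum) auto
  have Apos: "A > 0" using ai_le[of 0] a_pos pne by force
  have Spos: "S \<ge> 0" unfolding S_def using a_pos omega_pos
    by (intro sum_nonneg) (simp add: less_imp_le)
  have Bcnn: "Bc \<ge> 0" unfolding Bc_def using b_pos pi_pos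
    by (intro sum_nonneg) (simp add: less_imp_le)
  have Gz: "Gfun \<gamma> n b \<pi> 0 = Bc" by (simp add: Gfun_def Bc_def)
  interpret P: prob_space M by (rule prob)
  have bdd: "bdd_above (msupport M)"
    using supp_compact by (simp add: bounded_imp_bdd_above compact_imp_bounded)
  have sub: "msupport M \<subseteq> {0..R}"
    using supp_nonneg cSup_upper[OF _ bdd] by (auto simp: R_def right_endpoint_def)
  have AEt: "AE t in M. 0 \<le> t \<and> t \<le> R"
    using support_AE[OF P.finite_measure_axioms borel] sub by (auto elim!: eventually_mono)
  have Rpos: "R > 0" using endpoint_pos by (simp add: R_def)
  have sb: "- 1/(lam - R) \<le> s lam \<and> s lam \<le> - 1/lam" if lam: "lam > R" for lam
  proof -
    have meas: "(\<lambda>t::real. 1/(t-lam)) \<in> borel_measurable M"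
    proof -
      have "(\<lambda>t::real. 1/(t-lam)) \<in> borel_measurable borel" by measurable
      thus ?thesis unfolding measurable_cong_sets[OF borel refl] .
    qed
    have pt: "- 1/(lam - R) \<le> 1/(t-lam) \<and> 1/(t-lam) \<le> - 1/lam" if t: "0 \<le> t" "t \<le> R" for t
    proof -
      have d: "lam - t \<ge> lam - R" "lam - R > 0" "lam - t \<le> lam" using t lam by auto
      have "1/(lam - t) \<le> 1/(lam - R)" using d by (intro divide_left_mono) auto
      moreover have "1/lam \<le> 1/(lam - t)" using d by (intro divide_left_mono) auto
      moreover have "1/(t-lam) = - (1/(lam - t))"
        by (metis minus_diff_eq minus_divide_right)
      moreover have "- 1/(lam - R) = - (1/(lam - R))" "- 1/lam = - (1/lam)" by simp_all
      ultimately show ?thesis by linarith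
    qed
    have AEb: "AE t in M. - 1/(lam - R) \<le> 1/(t-lam) \<and> 1/(t-lam) \<le> - 1/lam"
      using AEt by (rule eventually_mono) (use pt in blast)
    have intf: "integrable M (\<lambda>t. 1/(t-lam))"
    proof (rule P.integrable_const_bound[OF _ meas])
      show "AE t in M. norm (1/(t-lam)) \<le> 1/(lam-R)"
      proof (rule eventually_mono[OF AEb])
        fix t assume h: "- 1/(lam - R) \<le> 1/(t-lam) \<and> 1/(t-lam) \<le> - 1/lam"
        have "1/lam > 0" using lam Rpos by simp
        have c: "1/(lam - R) > 0" using lam by simp
        show "norm (1/(t-lam)) \<le> 1/(lam-R)" unfolding real_norm_def abs_le_iff
          using h \<open>1/lam > 0\<close> c by (metis add.inverse_inverse dual_order.trans le_minus_iff less_le_not_le minus_divide_left neg_le_0_iff_le)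
      qed
    qed
    have "integral\<^sup>L M (\<lambda>t. - 1/(lam - R)) \<le> integral\<^sup>L M (\<lambda>t. 1/(t-lam))"
      by (rule integral_mono_AE[OF _ intf]) (use AEb in \<open>auto elim!: eventually_mono\<close>)
    moreover have "integral\<^sup>L M (\<lambda>t. 1/(t-lam)) \<le> integral\<^sup>L M (\<lambda>t. - 1/lam)"
      by (rule integral_mono_AE[OF intf]) (use AEb in \<open>auto elim!: eventually_mono\<close>)
    ultimately show ?thesis by (simp add: s_def stieltjes_def P.prob_space)
  qed
  have key: "e lam * g lam = 1 + lam * s lam" if lam: "lam > R" for lam
  proof -
    have nz: "\<And>i. i<p \<Longrightarrow> a i * g lam - lam \<noteq> 0" using nondeg lam by (auto simp: g_def R_def)
    have "e lam * g lam = (\<Sum>i<p. a i * \<omega> i / (a i * g lam - lam)) * g lam"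
      using e_eq lam by (simp add: g_def R_def)
    also have "\<dots> = (\<Sum>i<p. \<omega> i + lam * (\<omega> i / (a i * g lam - lam)))"
      unfolding sum_distrib_right
      by (rule sum.cong) (use nz in \<open>auto simp: field_simps\<close>)
    also have "\<dots> = 1 + lam * s lam"
      using s_eq lam omega_sum by (simp add: sum.distrib sum_distrib_left g_def R_def s_def)
    finally show ?thesis .
  qed
  have eg: "- R/(lam - R) \<le> e lam * g lam \<and> e lam * g lam \<le> 0" if lam: "lam > R" for lam
  proof -
    have "lam * (- 1/(lam - R)) \<le> lam * s lam" "lam * s lam \<le> lam * (-1/lam)"
      using mult_left_mono[of "- 1/(lam - R)" "s lam" lam] mult_left_mono[of "s lam" "- 1/lam" lam]
        sb[OF lam] lam Rpos by auto
    moreover have "1 + lam * (- 1/(lam - R)) = - R/(lam - R)" using lam by (simp add: field_simps)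
    ultimately show ?thesis using key[OF lam] lam Rpos by auto
  qed
  have negof: "e lam < 0" if lamR: "lam > R" and xn: "\<forall>i<p. a i * g lam - lam < 0" for lam
  proof -
    have eeq: "e lam = (\<Sum>i<p. a i * \<omega> i / (a i * g lam - lam))"
      using e_eq lamR by (simp add: g_def R_def)
    have "0 < (\<Sum>i<p. - (a i * \<omega> i / (a i * g lam - lam)))"
    proof (rule sum_pos)
      fix i assume "i \<in> {..<p}"
      hence "a i * \<omega> i > 0" "a i * g lam - lam < 0" using a_pos omega_pos xn by auto
      thus "0 < - (a i * \<omega> i / (a i * g lam - lam))" by (simp add: divide_pos_neg)
    qed (use pne in auto)
    thus "e lam < 0" using eeq by (simp add: sum_negf)
  qed
  have small_g: "e lam < 0 \<and> \<bar>e lam\<bar> \<le> 2*S/lam"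
    if lam: "lam > 0" and gs: "\<bar>g lam\<bar> \<le> lam/(2*A)" and lamR: "lam > R" for lam
  proof -
    have xi: "a i * g lam - lam \<le> - lam/2" if i: "i<p" for i
    proof -
      have "a i * \<bar>g lam\<bar> \<le> A * (lam/(2*A))"
        using ai_le[OF i] gs a_pos i by (intro mult_mono) auto
      also have "\<dots> = lam/2" using Apos by simp
      finally have "a i * \<bar>g lam\<bar> \<le> lam/2" .
      moreover have "a i * g lam \<le> a i * \<bar>g lam\<bar>" using a_pos i by (intro mult_left_mono) auto
      ultimately show ?thesis by linarith
    qed
    have eeq: "e lam = (\<Sum>i<p. a i * \<omega> i / (a i * g lam - lam))"
      using e_eq lam lamR by (simp add: g_def R_def)
    have neg: "e lam < 0" using negof[OF lamR] xi lam by force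
    have "\<bar>e lam\<bar> \<le> (\<Sum>i<p. \<bar>a i * \<omega> i / (a i * g lam - lam)\<bar>)"
      unfolding eeq by (rule sum_abs)
    also have "\<dots> \<le> (\<Sum>i<p. a i * \<omega> i * (2/lam))"
    proof (rule sum_mono)
      fix i assume "i \<in> {..<p}"
      hence i: "i < p" by simp
      have pos: "a i * \<omega> i > 0" using a_pos omega_pos i by auto
      have x: "\<bar>a i * g lam - lam\<bar> \<ge> lam/2" using xi[OF i] lam by auto
      have "\<bar>a i * \<omega> i / (a i * g lam - lam)\<bar> = a i * \<omega> i / \<bar>a i * g lam - lam\<bar>"
        using pos by (simp add: abs_div_pos)
      also have "\<dots> \<le> a i * \<omega> i / (lam/2)"
        using pos x lam by (intro divide_left_mono) (auto intro!: mult_pos_pos)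
      finally show "\<bar>a i * \<omega> i / (a i * g lam - lam)\<bar> \<le> a i * \<omega> i * (2/lam)" by simp
    qed
    also have "\<dots> = 2*S/lam" unfolding S_def sum_distrib_right[symmetric] by simp
    finally show ?thesis using neg by simp
  qed
  have lim0: "(e \<longlongrightarrow> 0) at_top"
  proof (rule tendstoI)
    fix \<epsilon> :: real assume ep: "\<epsilon> > 0"
    have ev: "eventually (\<lambda>lam. lam > R + R/\<epsilon> \<and> lam \<ge> 2*A \<and> lam > 2*S/\<epsilon> \<and> lam > 0) at_top"
      by (intro eventually_conj eventually_gt_at_top eventually_ge_at_top)
    show "eventually (\<lambda>lam. dist (e lam) 0 < \<epsilon>) at_top"
    proof (rule eventually_mono[OF ev], clarify)
      fix lam assume l1: "lam > R + R/\<epsilon>" and l2: "lam \<ge> 2*A" and l3: "lam > 2*S/\<epsilon>" and l4: "lam > 0"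
      have "R/\<epsilon> > 0" using Rpos ep by simp
      hence lR: "lam > R" using l1 by linarith
      have "R/(lam - R) < \<epsilon>" using l1 lR ep by (simp add: field_simps)
      hence egb: "\<bar>e lam * g lam\<bar> < \<epsilon>" using eg[OF lR] by auto
      show "dist (e lam) 0 < \<epsilon>"
      proof (rule ccontr)
        assume "\<not> dist (e lam) 0 < \<epsilon>"
        hence ge: "\<bar>e lam\<bar> \<ge> \<epsilon>" by simp
        have "\<epsilon> * \<bar>g lam\<bar> \<le> \<bar>e lam\<bar> * \<bar>g lam\<bar>" using ge by (intro mult_right_mono) auto
        hence "\<epsilon> * \<bar>g lam\<bar> < \<epsilon> * 1" using egb by (simp add: abs_mult)
        hence "\<bar>g lam\<bar> < 1" using ep by simp
        moreover have "1 \<le> lam/(2*A)" using l2 Apos by simp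
        ultimately have "\<bar>e lam\<bar> \<le> 2*S/lam" using small_g[OF l4 _ lR] by auto
        moreover have "2*S/lam < \<epsilon>" using l3 l4 ep by (simp add: field_simps)
        ultimately show False using ge by simp
      qed
    qed
  qed
  have neg: "eventually (\<lambda>lam. e lam < 0) at_top"
  proof (rule eventually_mono[OF eventually_gt_at_top[of "R + 2 * A * Bc + 1"]])
    fix lam assume l: "lam > R + 2 * A * Bc + 1"
    have "2 * A * Bc \<ge> 0" using Apos Bcnn by simp
    hence lR: "lam > R" using l by linarith
    show "e lam < 0"
    proof (rule ccontr)
      assume "\<not> e lam < 0"
      hence e0: "e lam \<ge> 0" by simp
      show False
      proof (cases "e lam = 0")
        case True
        hence "g lam = Bc" by (simp add: g_def Gz)
        have "\<forall>i<p. a i * g lam - lam < 0"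
        proof (intro allI impI)
          fix i assume i: "i < p"
          have "a i * Bc \<le> A * Bc" using ai_le[OF i] Bcnn by (rule mult_right_mono)
          moreover have "A * Bc \<ge> 0" using Apos Bcnn by simp
          moreover have "a i * g lam = a i * Bc" using \<open>g lam = Bc\<close> by simp
          moreover have "2*A*Bc = 2*(A*Bc)" by simp
          ultimately show "a i * g lam - lam < 0" using l Rpos by linarith
        qed
        thus False using negof[OF lR] e0 by auto
      next
        case False
        hence "e lam > 0" using e0 by simp
        hence "g lam \<le> 0" using eg[OF lR] by (simp add: mult_le_0_iff)
        have "\<forall>i<p. a i * g lam - lam < 0"
        proof (intro allI impI)
          fix i assume i: "i < p"
          have "a i * g lam \<le> 0" using a_pos i \<open>g lam \<le> 0\<close> mult_nonneg_nonpos[of "a i" "g lam"] by auto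
          thus "a i * g lam - lam < 0" using lR Rpos by linarith
        qed
        hence "e lam < 0" using negof[OF lR] by auto
        thus False using e0 by simp
      qed
    qed
  qed
  show ?thesis by (rule tendsto_imp_filterlim_at_left[OF lim0 neg])
qed

end
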